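(* In a phase space $Z_2$, the instantaneous perturbation propagation problem (the linearized Euler system with initial data $(v_x',v_y',v_z',p')(\cdot,0)=I\in Z_2$) is well posed on every interval of time $[0,t_0]$, and the null solution is stable with respect to the class $Z_2$ of initial perturbations.
   Context: Fix constants $U_0,c_0,\rho_0>0$. Linearized Euler system: $\partial_t v_x' + U_0\partial_x v_x' + \frac1{\rho_0}\partial_x p' = 0$, $\partial_t v_y' + U_0\partial_x v_y' + \frac1{\rho_0}\partial_y p' = 0$, $\partial_t v_z' + U_0\partial_x v_z' + \frac1{\rho_0}\partial_z p' = 0$, $\partial_t p' + U_0\partial_xp' + \rho_0c_0^2(\partial_xv_x'+\partial_yv_y'+\partial_zv_z') = 0$. Phase space $Z_2$: fix real constants $k_i,l_i,m_i$ ($i=1,\dots,4$) with $k_1k_2k_3k_4\neq0$ and $\Delta = \frac{c_0\rho_0}{k_3k_4}[r_1(k_2k_3k_4+k_3m_2m_4+k_4l_2l_3) + r_2(k_1k_3k_4+k_3m_1m_4+k_4l_1l_3)]\neq0$, $r_i=\sqrt{k_i^2+l_i^2+m_i^2}$. With $\xi_i=k_ix+l_iy+m_iz$, $Z_2$ is the set of systems $I=(F,G,H,P)$ of bounded $C^1$ functions on $\mathbb{R}^3$ of the form $F = k_1f_1(\xi_1)+k_2f_2(\xi_2)+\frac{l_3}{k_3}f_3(\xi_3)+\frac{m_4}{k_4}f_4(\xi_4)$, $G = l_1f_1(\xi_1)+l_2f_2(\xi_2)-f_3(\xi_3)$, $H = m_1f_1(\xi_1)+m_2f_2(\xi_2)-f_4(\xi_4)$,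 $P = -c_0\rho_0r_1f_1(\xi_1)+c_0\rho_0r_2f_2(\xi_2)$ with $f_i:\mathbb{R}\to\mathbb{R}$ continuously differentiable, normed by $\|I\|_{Z_2}=\max\{\sup|F|,\sup|G|,\sup|H|,\sup|P|\}$. Well-posedness on $[0,t_0]$: (a) for every $I\in Z_2$ there is a unique solution with initial value $I$ defined for $t\in[0,t_0]$; (b) if $I_n\to I$ in $Z_2$ then the corresponding solutions converge in $Z_2$ to the solution for $I$ at every $t\in[0,t_0]$. Stability of the null solution: the problem is well posed on $[0,t_0]$ for every $t_0>0$ and for every $\varepsilon>0$ there is $\eta>0$ such that $\|I\|_{Z_2}<\eta$ implies $\|(v_x',v_y',v_z',p')(\cdot,t)\|_{Z_2}<\varepsilon$ for all $t\ge0$. *)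

theory Defs
  imports "HOL-Analysis.Analysis"
begin

text \<open>A scalar field on R^3 (arguments x y z), and a state (v_x', v_y', v_z', p').\<close>
type_synonym field = "real \<Rightarrow> real \<Rightarrow> real \<Rightarrow> real"
type_synonym state = "field \<times> field \<times> field \<times> field"

text \<open>Parameters k, l, m are indexed by 1..4.\<close>
definition rr :: "(nat \<Rightarrow> real) \<Rightarrow> (nat \<Rightarrow> real) \<Rightarrow> (nat \<Rightarrow> real) \<Rightarrow> nat \<Rightarrow> real" where
  "rr k l m i = sqrt ((k i)\<^sup>2 + (l i)\<^sup>2 + (m i)\<^sup>2)"

definition Delta :: "real \<Rightarrow> real \<Rightarrow> (nat \<Rightarrow> real) \<Rightarrow> (nat \<Rightarrow> real) \<Rightarrow> (nat \<Rightarrow> real) \<Rightarrow> real" where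
  "Delta c0 \<rho>0 k l m = c0 * \<rho>0 / (k 3 * k 4) *
     (rr k l m 1 * (k 2 * k 3 * k 4 + k 3 * m 2 * m 4 + k 4 * l 2 * l 3)
    + rr k l m 2 * (k 1 * k 3 * k 4 + k 3 * m 1 * m 4 + k 4 * l 1 * l 3))"

definition bounded_field :: "field \<Rightarrow> bool" where
  "bounded_field F \<longleftrightarrow> bounded (range (\<lambda>(x, y, z). F x y z))"

definition Z2 :: "real \<Rightarrow> real \<Rightarrow> (nat \<Rightarrow> real) \<Rightarrow> (nat \<Rightarrow> real) \<Rightarrow> (nat \<Rightarrow> real) \<Rightarrow> state set" where
  "Z2 c0 \<rho>0 k l m = {(F, G, H, P). bounded_field F \<and> bounded_field G \<and> bounded_field H \<and> bounded_field P \<and>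
     (\<exists>f :: nat \<Rightarrow> real \<Rightarrow> real.
        (\<forall>i\<in>{1..4}. f i C1_differentiable_on UNIV) \<and>
        (\<forall>x y z. let \<xi> = (\<lambda>i. k i * x + l i * y + m i * z) in
           F x y z = k 1 * f 1 (\<xi> 1) + k 2 * f 2 (\<xi> 2) + l 3 / k 3 * f 3 (\<xi> 3) + m 4 / k 4 * f 4 (\<xi> 4) \<and>
           G x y z = l 1 * f 1 (\<xi> 1) + l 2 * f 2 (\<xi> 2) - f 3 (\<xi> 3) \<and>
           H x y z = m 1 * f 1 (\<xi> 1) + m 2 * f 2 (\<xi> 2) - f 4 (\<xi> 4) \<and>
           P x y z = - c0 * \<rho>0 * rr k l m 1 * f 1 (\<xi> 1) + c0 * \<rho>0 * rr k l m 2 * f 2 (\<xi> 2)))}"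

definition supf :: "field \<Rightarrow> real" where
  "supf F = (SUP p \<in> UNIV. (case p of (x, y, z) \<Rightarrow> \<bar>F x y z\<bar>))"

definition znorm :: "state \<Rightarrow> real" where
  "znorm I = (case I of (F, G, H, P) \<Rightarrow> max (max (supf F) (supf G)) (max (supf H) (supf P)))"

definition zsub :: "state \<Rightarrow> state \<Rightarrow> state" where
  "zsub I J = (case I of (F, G, H, P) \<Rightarrow> case J of (F', G', H', P') \<Rightarrow>
     (\<lambda>x y z. F x y z - F' x y z, \<lambda>x y z. G x y z - G' x y z,
      \<lambda>x y z. H x y z - H' x y z, \<lambda>x y z. P x y z - P' x y z))"

definition comp :: "nat \<Rightarrow> state \<Rightarrow> field" where
  "comp j I = (case I of (F, G, H, P) \<Rightarrow> if j = 0 then F else if j = 1 then G else if j = 2 then H else P)"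

definition C1_partials :: "real \<Rightarrow> (real \<Rightarrow> real \<Rightarrow> real \<Rightarrow> real \<Rightarrow> real)
    \<Rightarrow> (nat \<Rightarrow> real \<Rightarrow> real \<Rightarrow> real \<Rightarrow> real \<Rightarrow> real) \<Rightarrow> bool" where
  "C1_partials t0 w d \<longleftrightarrow>
     (\<forall>x y z. \<forall>t\<in>{0..t0}.
        ((\<lambda>s. w s y z t) has_real_derivative d 0 x y z t) (at x) \<and>
        ((\<lambda>s. w x s z t) has_real_derivative d 1 x y z t) (at y) \<and>
        ((\<lambda>s. w x y s t) has_real_derivative d 2 x y z t) (at z) \<and>
        ((\<lambda>s. w x y z s) has_real_derivative d 3 x y z t) (at t within {0..t0})) \<and>
     continuous_on (UNIV \<times> UNIV \<times> UNIV \<times> {0..t0}) (\<lambda>(x, y, z, t). w x y z t) \<and>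
     (\<forall>a<4. continuous_on (UNIV \<times> UNIV \<times> UNIV \<times> {0..t0}) (\<lambda>(x, y, z, t). d a x y z t))"

definition is_solution :: "real \<Rightarrow> real \<Rightarrow> real \<Rightarrow> state set \<Rightarrow> real \<Rightarrow> state \<Rightarrow> (real \<Rightarrow> state) \<Rightarrow> bool" where
  "is_solution U0 c0 \<rho>0 Z t0 I u \<longleftrightarrow>
     u 0 = I \<and> (\<forall>t\<in>{0..t0}. u t \<in> Z) \<and>
     (\<exists>D :: nat \<Rightarrow> nat \<Rightarrow> real \<Rightarrow> real \<Rightarrow> real \<Rightarrow> real \<Rightarrow> real.
        (\<forall>j<4. C1_partials t0 (\<lambda>x y z t. comp j (u t) x y z) (D j)) \<and>
        (\<forall>x y z. \<forall>t\<in>{0..t0}.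
           D 0 3 x y z t + U0 * D 0 0 x y z t + 1 / \<rho>0 * D 3 0 x y z t = 0 \<and>
           D 1 3 x y z t + U0 * D 1 0 x y z t + 1 / \<rho>0 * D 3 1 x y z t = 0 \<and>
           D 2 3 x y z t + U0 * D 2 0 x y z t + 1 / \<rho>0 * D 3 2 x y z t = 0 \<and>
           D 3 3 x y z t + U0 * D 3 0 x y z t
             + \<rho>0 * c0\<^sup>2 * (D 0 0 x y z t + D 1 1 x y z t + D 2 2 x y z t) = 0))"

definition well_posed :: "real \<Rightarrow> real \<Rightarrow> real \<Rightarrow> state set \<Rightarrow> real \<Rightarrow> bool" where
  "well_posed U0 c0 \<rho>0 Z t0 \<longleftrightarrow>
     (\<forall>I\<in>Z. (\<exists>u. is_solution U0 c0 \<rho>0 Z t0 I u) \<and>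
        (\<forall>u v. is_solution U0 c0 \<rho>0 Z t0 I u \<longrightarrow> is_solution U0 c0 \<rho>0 Z t0 I v \<longrightarrow>
           (\<forall>t\<in>{0..t0}. u t = v t))) \<and>
     (\<forall>In I un u. (\<forall>n. In n \<in> Z) \<longrightarrow> I \<in> Z \<longrightarrow>
        (\<lambda>n. znorm (zsub (In n) I)) \<longlonglongrightarrow> 0 \<longrightarrow>
        (\<forall>n. is_solution U0 c0 \<rho>0 Z t0 (In n) (un n)) \<longrightarrow> is_solution U0 c0 \<rho>0 Z t0 I u \<longrightarrow>
        (\<forall>t\<in>{0..t0}. (\<lambda>n. znorm (zsub (un n t) (u t))) \<longlonglongrightarrow> 0))"

definition null_stable :: "real \<Rightarrow> real \<Rightarrow> real \<Rightarrow> state set \<Rightarrow> bool" where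
  "null_stable U0 c0 \<rho>0 Z \<longleftrightarrow>
     (\<forall>t0>0. well_posed U0 c0 \<rho>0 Z t0) \<and>
     (\<forall>\<epsilon>>0. \<exists>\<eta>>0. \<forall>I\<in>Z. znorm I < \<eta> \<longrightarrow>
        (\<forall>t0>0. \<forall>u. is_solution U0 c0 \<rho>0 Z t0 I u \<longrightarrow> (\<forall>t\<in>{0..t0}. znorm (u t) < \<epsilon>)))"

end

theory Submission
  imports Defs
begin

lemma sum14: "(\<Sum>i\<in>{1..4::nat}. F i) = F 1 + F 2 + F 3 + F 4"
  by (simp add: eval_nat_numeral atLeastAtMostSuc_conv add_ac)
lemma sum14': "(\<Sum>i\<in>{Suc 0..4::nat}. F i) = F 1 + F 2 + F 3 + F 4"
  using sum14 by simp
lemma sum4: "(\<Sum>j<(4::nat). F j) = F 0 + F 1 + F 2 + F 3"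
  by (simp add: eval_nat_numeral add_ac)

lemma bf_le: "bounded_field F \<Longrightarrow> \<bar>F x y z\<bar> \<le> supf F"
proof -
  assume "bounded_field F"
  then obtain B where B: "\<And>p. p \<in> range (\<lambda>(x, y, z). F x y z) \<Longrightarrow> norm p \<le> B"
    unfolding bounded_field_def bounded_iff by blast
  have B': "\<bar>F x y z\<bar> \<le> B" for x y z
    using B[of "F x y z"] by (metis (mono_tags) UNIV_I case_prod_conv image_eqI real_norm_def)
  have "bdd_above ((\<lambda>p. case p of (x, y, z) \<Rightarrow> \<bar>F x y z\<bar>) ` UNIV)"
    by (rule bdd_aboveI[of _ B]) (use B' in auto)
  then show ?thesis unfolding supf_def
    using cSUP_upper[of "(x, y, z)" UNIV "\<lambda>p. case p of (x, y, z) \<Rightarrow> \<bar>F x y z\<bar>"] by simp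
qed

lemma supf_le: "(\<And>x y z. \<bar>F x y z\<bar> \<le> B) \<Longrightarrow> supf F \<le> B"
  unfolding supf_def by (rule cSUP_least) auto

lemma bf_I: "(\<And>x y z. \<bar>F x y z\<bar> \<le> B) \<Longrightarrow> bounded_field F"
  unfolding bounded_field_def bounded_iff by auto

lemma znorm_ge: "(\<forall>j<4. bounded_field (comp j I)) \<Longrightarrow> j < 4 \<Longrightarrow> \<bar>comp j I x y z\<bar> \<le> znorm I"
proof -
  assume a: "\<forall>j<4. bounded_field (comp j I)" and j: "j < 4"
  obtain F G H P where I: "I = (F, G, H, P)" by (cases I) auto
  have b: "bounded_field F" "bounded_field G" "bounded_field H" "bounded_field P"
    using a by (auto simp: I comp_def dest: spec[of _ 0] spec[of _ 1] spec[of _ 2] spec[of _ 3])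
  have "j = 0 \<or> j = 1 \<or> j = 2 \<or> j = 3" using j by auto
  then show ?thesis
    using bf_le[OF b(1), of x y z] bf_le[OF b(2), of x y z] bf_le[OF b(3), of x y z] bf_le[OF b(4), of x y z]
    by (auto simp: I comp_def znorm_def)
qed

lemma znorm_le: "(\<And>j x y z. j < 4 \<Longrightarrow> \<bar>comp j I x y z\<bar> \<le> B) \<Longrightarrow> znorm I \<le> B"
proof -
  assume a: "\<And>j x y z. j < 4 \<Longrightarrow> \<bar>comp j I x y z\<bar> \<le> B"
  obtain F G H P where I: "I = (F, G, H, P)" by (cases I) auto
  have "supf F \<le> B" "supf G \<le> B" "supf H \<le> B" "supf P \<le> B"
    using a[of 0] a[of 1] a[of 2] a[of 3] by (auto simp: I comp_def intro!: supf_le)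
  then show ?thesis by (simp add: znorm_def I)
qed

lemma znorm_nonneg: "(\<forall>j<4. bounded_field (comp j I)) \<Longrightarrow> znorm I \<ge> 0"
  using znorm_ge[of I 0 0 0 0] by auto

locale lee =
  fixes U0 c0 \<rho>0 :: real and k l m :: "nat \<Rightarrow> real"
  assumes U0: "U0 > 0" and c0: "c0 > 0" and rho: "\<rho>0 > 0"
    and kne: "k 1 * k 2 * k 3 * k 4 \<noteq> 0"
    and Dne: "Delta c0 \<rho>0 k l m \<noteq> 0"
begin

abbreviation "r \<equiv> rr k l m"
definition "al = l 3 / k 3"
definition "be = m 4 / k 4"
definition "mu i = k i + l i * al + m i * be"
definition "cr = c0 * \<rho>0"
definition "D0 = r 2 * mu 1 + r 1 * mu 2"

lemma k1: "k 1 \<noteq> 0" and k2: "k 2 \<noteq> 0" and k3: "k 3 \<noteq> 0" and k4: "k 4 \<noteq> 0"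
  using kne by auto

lemma cr_pos: "cr > 0" using c0 rho by (simp add: cr_def)

lemma Delta_eq: "Delta c0 \<rho>0 k l m = cr * D0"
  unfolding Delta_def D0_def mu_def al_def be_def cr_def using k3 k4
  by (simp add: field_simps)

lemma D0ne: "D0 \<noteq> 0" using Dne Delta_eq by auto

definition cf :: "nat \<Rightarrow> nat \<Rightarrow> real" where
 "cf j i = (if j = 0 then (if i = 1 then k 1 else if i = 2 then k 2 else if i = 3 then l 3 / k 3 else m 4 / k 4)
   else if j = 1 then (if i = 1 then l 1 else if i = 2 then l 2 else if i = 3 then -1 else 0)
   else if j = 2 then (if i = 1 then m 1 else if i = 2 then m 2 else if i = 3 then 0 else -1)
   else (if i = 1 then - c0 * \<rho>0 * r 1 else if i = 2 then c0 * \<rho>0 * r 2 else 0))"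

definition L1 :: "nat \<Rightarrow> real" where "L1 j = (if j = 0 then r 2 / D0 else if j = 1 then al * r 2 / D0 else if j = 2 then be * r 2 / D0
   else - mu 2 / (cr * D0))"
definition L2 :: "nat \<Rightarrow> real" where "L2 j = (if j = 0 then r 1 / D0 else if j = 1 then al * r 1 / D0 else if j = 2 then be * r 1 / D0
   else mu 1 / (cr * D0))"
definition Lc :: "nat \<Rightarrow> nat \<Rightarrow> real" where "Lc i j = (if i = 1 then L1 j else if i = 2 then L2 j else if i = 3 then l 1 * L1 j + l 2 * L2 j - (if j = 1 then 1 else 0)
   else m 1 * L1 j + m 2 * L2 j - (if j = 2 then 1 else 0))"

definition lf :: "nat \<Rightarrow> (nat \<Rightarrow> real) \<Rightarrow> real" where "lf i (v :: nat \<Rightarrow> real) = (\<Sum>j<4. Lc i j * v j)"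

lemma lf1_eq: "lf 1 v = ((v 0 + al * v 1 + be * v 2) * r 2 - mu 2 * (v 3 / cr)) / D0"
  unfolding lf_def sum4 Lc_def L1_def using D0ne cr_pos by (simp add: field_simps)
lemma lf2_eq: "lf 2 v = ((v 0 + al * v 1 + be * v 2) * r 1 + mu 1 * (v 3 / cr)) / D0"
  unfolding lf_def sum4 Lc_def L2_def using D0ne cr_pos by (simp add: field_simps)

lemma dual12:
  "lf 1 (\<lambda>j. \<Sum>i'\<in>{1..4}. cf j i' * a i') = a 1 \<and> lf 2 (\<lambda>j. \<Sum>i'\<in>{1..4}. cf j i' * a i') = a 2"
proof -
  let ?v = "(\<lambda>j. \<Sum>i'\<in>{1..4}. cf j i' * a i')"
  have "D0 \<noteq> 0" "cr \<noteq> 0" using D0ne cr_pos by auto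
  have S: "?v 0 + al * ?v 1 + be * ?v 2 = mu 1 * a 1 + mu 2 * a 2"
    unfolding sum14 cf_def mu_def by (simp add: al_def[symmetric] be_def[symmetric] algebra_simps)
  have P: "?v 3 / cr = - r 1 * a 1 + r 2 * a 2"
    unfolding sum14 cf_def using \<open>cr \<noteq> 0\<close> by (simp add: cr_def field_simps)
  have 1: "lf 1 ?v = a 1"
    unfolding lf1_eq S P using \<open>D0 \<noteq> 0\<close> unfolding D0_def by (simp add: field_simps; simp add: algebra_simps)
  have 2: "lf 2 ?v = a 2"
    unfolding lf2_eq S P using \<open>D0 \<noteq> 0\<close> unfolding D0_def by (simp add: field_simps; simp add: algebra_simps)
  show ?thesis using 1 2 by simp
qed

lemma dual:
  assumes "i \<in> {1..4}"
  shows "lf i (\<lambda>j. \<Sum>i'\<in>{1..4}. cf j i' * a i') = a i"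
proof -
  let ?v = "(\<lambda>j. \<Sum>i'\<in>{1..4}. cf j i' * a i')"
  have d: "lf 1 ?v = a 1" "lf 2 ?v = a 2"
    using dual12 by auto
  have lf3: "lf 3 v = l 1 * lf 1 v + l 2 * lf 2 v - v 1" for v
    unfolding lf_def sum4 Lc_def by (simp add: algebra_simps)
  have lf4: "lf 4 v = m 1 * lf 1 v + m 2 * lf 2 v - v 2" for v
    unfolding lf_def sum4 Lc_def by (simp add: algebra_simps)
  have v1: "?v 1 = l 1 * a 1 + l 2 * a 2 - a 3" unfolding sum14 cf_def by simp
  have v2: "?v 2 = m 1 * a 1 + m 2 * a 2 - a 4" unfolding sum14 cf_def by simp
  have 3: "lf 3 ?v = a 3" unfolding lf3 d v1 by simp
  have 4: "lf 4 ?v = a 4" unfolding lf4 d v2 by simp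
  have "i = 1 \<or> i = 2 \<or> i = 3 \<or> i = 4" using assms by auto
  then show ?thesis
    using d 3 4 by auto
qed


lemma kne_i: "i \<in> {1..4} \<Longrightarrow> k i \<noteq> 0"
  using k1 k2 k3 k4 by (auto simp: eval_nat_numeral le_Suc_eq)

lemma cases4: "i \<in> {1..4::nat} \<Longrightarrow> i = 1 \<or> i = 2 \<or> i = 3 \<or> i = 4" by auto

definition xi :: "nat \<Rightarrow> real \<Rightarrow> real \<Rightarrow> real \<Rightarrow> real" where "xi i x y z = k i * x + l i * y + m i * z"
definition wf :: "nat \<Rightarrow> (nat \<Rightarrow> real \<Rightarrow> real) \<Rightarrow> field" where
  "wf j g x y z = (\<Sum>i\<in>{1..4}. cf j i * g i (xi i x y z))"
definition wave :: "(nat \<Rightarrow> real \<Rightarrow> real) \<Rightarrow> state" where "wave g = (wf 0 g, wf 1 g, wf 2 g, wf 3 g)"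

lemma comp_wave: "j < 4 \<Longrightarrow> comp j (wave g) = wf j g"
  by (auto simp: comp_def wave_def eval_nat_numeral less_Suc_eq)

lemma lf_wave: "i \<in> {1..4} \<Longrightarrow> lf i (\<lambda>j. wf j g (a / k i) 0 0) = g i a"
proof -
  assume i: "i \<in> {1..4}"
  have "lf i (\<lambda>j. wf j g (a / k i) 0 0) = g i (xi i (a / k i) 0 0)"
    unfolding wf_def by (rule dual[OF i])
  also have "xi i (a / k i) 0 0 = a" using kne_i[OF i] by (simp add: xi_def)
  finally show ?thesis .
qed

lemma wave_cong: "(\<And>i. i \<in> {1..4} \<Longrightarrow> g i = g' i) \<Longrightarrow> wave g = wave g'"
  unfolding wave_def wf_def by (intro prod_eqI ext sum.cong) auto

lemma Z2_iff: "I \<in> Z2 c0 \<rho>0 k l m \<longleftrightarrow> (\<forall>j<4. bounded_field (comp j I)) \<and>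
   (\<exists>f. (\<forall>i\<in>{1..4}. f i C1_differentiable_on UNIV) \<and> I = wave f)"
proof -
  obtain F G H P where I: "I = (F, G, H, P)" by (cases I) auto
  have all4: "(\<forall>j<4. Q j) \<longleftrightarrow> Q 0 \<and> Q 1 \<and> Q 2 \<and> Q 3" for Q :: "nat \<Rightarrow> bool"
    by (auto simp: eval_nat_numeral less_Suc_eq)
  have eq: "(\<forall>x y z. let \<xi> = (\<lambda>i. k i * x + l i * y + m i * z) in
           F x y z = k 1 * f 1 (\<xi> 1) + k 2 * f 2 (\<xi> 2) + l 3 / k 3 * f 3 (\<xi> 3) + m 4 / k 4 * f 4 (\<xi> 4) \<and>
           G x y z = l 1 * f 1 (\<xi> 1) + l 2 * f 2 (\<xi> 2) - f 3 (\<xi> 3) \<and>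
           H x y z = m 1 * f 1 (\<xi> 1) + m 2 * f 2 (\<xi> 2) - f 4 (\<xi> 4) \<and>
           P x y z = - c0 * \<rho>0 * rr k l m 1 * f 1 (\<xi> 1) + c0 * \<rho>0 * rr k l m 2 * f 2 (\<xi> 2))
     \<longleftrightarrow> (F, G, H, P) = wave f" for f
    unfolding wave_def wf_def sum14 cf_def xi_def Let_def
    by (simp add: fun_eq_iff) (auto simp: algebra_simps)
  show ?thesis
    unfolding I Z2_def mem_Collect_eq prod.case eq all4 by (simp add: comp_def)
qed

definition "KL = (\<Sum>i\<in>{1..4}. \<Sum>j<4. \<bar>Lc i j\<bar>)"
definition "CW = (\<Sum>j<4. \<Sum>i\<in>{1..4}. \<bar>cf j i\<bar>)"

lemma KL_nonneg: "KL \<ge> 0" unfolding KL_def by (intro sum_nonneg) auto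
lemma CW_nonneg: "CW \<ge> 0" unfolding CW_def by (intro sum_nonneg) auto

lemma lf_bound:
  assumes "\<And>j. j < 4 \<Longrightarrow> \<bar>v j\<bar> \<le> M" and i: "i \<in> {1..4}"
  shows "\<bar>lf i v\<bar> \<le> KL * M"
proof -
  have M: "M \<ge> 0" using assms(1)[of 0] by auto
  have "\<bar>lf i v\<bar> \<le> (\<Sum>j<4. \<bar>Lc i j\<bar> * \<bar>v j\<bar>)"
    unfolding lf_def by (rule order_trans[OF sum_abs]) (simp add: abs_mult)
  also have "\<dots> \<le> (\<Sum>j<4. \<bar>Lc i j\<bar> * M)"
    by (intro sum_mono mult_left_mono assms(1)) auto
  also have "\<dots> = (\<Sum>j<4. \<bar>Lc i j\<bar>) * M" by (simp add: sum_distrib_right)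
  also have "\<dots> \<le> KL * M"
    unfolding KL_def using i by (intro mult_right_mono M member_le_sum[where f = "\<lambda>i. \<Sum>j<4. \<bar>Lc i j\<bar>"]) (auto intro: sum_nonneg)
  finally show ?thesis .
qed

lemma g_bound:
  assumes "\<And>j x y z. j < 4 \<Longrightarrow> \<bar>wf j g x y z\<bar> \<le> M" and i: "i \<in> {1..4}"
  shows "\<bar>g i a\<bar> \<le> KL * M"
  using lf_bound[of "\<lambda>j. wf j g (a / k i) 0 0" M i] assms lf_wave[OF i] by simp

lemma wf_bound:
  assumes "\<And>i a. i \<in> {1..4} \<Longrightarrow> \<bar>g i a\<bar> \<le> M" and j: "j < 4"
  shows "\<bar>wf j g x y z\<bar> \<le> CW * M"
proof -
  have M: "M \<ge> 0" using assms(1)[of 1] by force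
  have "\<bar>wf j g x y z\<bar> \<le> (\<Sum>i\<in>{1..4}. \<bar>cf j i\<bar> * \<bar>g i (xi i x y z)\<bar>)"
    unfolding wf_def by (rule order_trans[OF sum_abs]) (simp add: abs_mult)
  also have "\<dots> \<le> (\<Sum>i\<in>{1..4}. \<bar>cf j i\<bar> * M)"
    by (intro sum_mono mult_left_mono assms(1)) auto
  also have "\<dots> = (\<Sum>i\<in>{1..4}. \<bar>cf j i\<bar>) * M" by (simp add: sum_distrib_right)
  also have "\<dots> \<le> CW * M"
    unfolding CW_def using j by (intro mult_right_mono M member_le_sum[where f = "\<lambda>j. \<Sum>i\<in>{1..4}. \<bar>cf j i\<bar>"]) (auto intro: sum_nonneg)
  finally show ?thesis .
qed

end



lemma transport:
  fixes h ha ht :: "real \<Rightarrow> real \<Rightarrow> real"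
  assumes ha: "\<And>a t. t \<in> {0..T} \<Longrightarrow> ((\<lambda>a. h a t) has_real_derivative ha a t) (at a)"
    and ht: "\<And>a t. t \<in> {0..T} \<Longrightarrow> ((\<lambda>t. h a t) has_real_derivative ht a t) (at t within {0..T})"
    and cont: "continuous_on (UNIV \<times> {0..T}) (\<lambda>(a, t). ht a t)"
    and rel: "\<And>a t. t \<in> {0..T} \<Longrightarrow> ht a t = s * ha a t"
    and t: "t \<in> {0..T}"
  shows "h a t = h (a + s * t) 0"
proof -
  define g' where "g' p = (\<lambda>(da, dt). ha (fst p) (snd p) * da + ht (fst p) (snd p) * dt)" for p :: "real \<times> real"
  have jd: "((\<lambda>(a, t). h a t) has_derivative g' p) (at p within UNIV \<times> {0..T})" if p: "p \<in> UNIV \<times> {0..T}" for p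
  proof -
    obtain a t where pe: "p = (a, t)" by (cases p) auto
    have tT: "t \<in> {0..T}" using p pe by auto
    have "((\<lambda>(a, t). h a t) has_derivative (\<lambda>(tx, ty). ha a t * tx + blinfun_apply (blinfun_mult_left (ht a t)) ty)) (at (a, t) within UNIV \<times> {0..T})"
    proof (rule has_derivative_partialsI)
      show "((\<lambda>a. h a t) has_derivative (\<lambda>tx. ha a t * tx)) (at a within UNIV)"
        using ha[OF tT] by (simp add: has_field_derivative_def)
      show "((\<lambda>y. h x y) has_derivative blinfun_apply (blinfun_mult_left (ht x y))) (at y within {0..T})"
        if "x \<in> UNIV" "y \<in> {0..T}" for x y
      proof (rule has_derivative_eq_rhs)
        show "((\<lambda>y. h x y) has_derivative (*) (ht x y)) (at y within {0..T})"
          using ht[OF that(2)] by (simp add: has_field_derivative_def)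
        show "(*) (ht x y) = blinfun_apply (blinfun_mult_left (ht x y))"
          by (simp add: fun_eq_iff mult.commute)
      qed
      have c1: "continuous (at (a, t) within UNIV \<times> {0..T}) (\<lambda>(a, t). ht a t)"
        using cont tT by (simp add: continuous_on_eq_continuous_within)
      have "continuous (at (a, t) within UNIV \<times> {0..T}) (\<lambda>p. blinfun_mult_left ((\<lambda>(a, t). ht a t) p))"
        by (rule bounded_linear.continuous[OF bounded_linear_blinfun_mult_left c1])
      moreover have "(\<lambda>p. blinfun_mult_left ((\<lambda>(a, t). ht a t) p)) = (\<lambda>(x, y). blinfun_mult_left (ht x y))"
        by (auto simp: fun_eq_iff)
      ultimately show "continuous (at (a, t) within UNIV \<times> {0..T}) (\<lambda>(x, y). blinfun_mult_left (ht x y))"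
        by simp
      show "t \<in> {0..T}" by (rule tT)
      show "convex {0..T::real}" by (rule convex_real_interval)
    qed
    moreover have "(\<lambda>(tx, ty). ha a t * tx + blinfun_apply (blinfun_mult_left (ht a t)) ty) = g' p"
      by (auto simp: g'_def pe fun_eq_iff mult.commute)
    ultimately show ?thesis by (simp add: pe)
  qed
  define \<phi> where "\<phi> \<tau> = h (a + s * (t - \<tau>)) \<tau>" for \<tau>
  have tT: "0 \<le> t" "t \<le> T" using t by auto
  have d0: "(\<phi> has_derivative (\<lambda>_. 0)) (at \<tau> within {0..t})" if \<tau>: "\<tau> \<in> {0..t}" for \<tau>
  proof -
    have inner: "((\<lambda>\<tau>. (a + s * (t - \<tau>), \<tau>)) has_derivative (\<lambda>d. (- (s * d), d))) (at \<tau> within {0..t})"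
    proof (rule has_derivative_Pair)
      show "((\<lambda>\<tau>. a + s * (t - \<tau>)) has_derivative (\<lambda>d. - (s * d))) (at \<tau> within {0..t})"
        by (auto intro!: derivative_eq_intros)
      show "((\<lambda>\<tau>. \<tau>) has_derivative (\<lambda>d. d)) (at \<tau> within {0..t})"
        by (rule has_derivative_ident)
    qed
    have img: "(\<lambda>\<tau>. (a + s * (t - \<tau>), \<tau>)) ` {0..t} \<subseteq> UNIV \<times> {0..T}" using tT by auto
    have comp: "((\<lambda>x. (\<lambda>(a, t). h a t) ((\<lambda>\<tau>. (a + s * (t - \<tau>), \<tau>)) x)) has_derivative
        (\<lambda>y. g' ((\<lambda>\<tau>. (a + s * (t - \<tau>), \<tau>)) \<tau>) (- (s * y), y))) (at \<tau> within {0..t})"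
      by (rule has_derivative_in_compose2[OF jd img \<tau> inner])
    have \<tau>T: "\<tau> \<in> {0..T}" using \<tau> tT by auto
    have "(\<lambda>y. g' ((\<lambda>\<tau>. (a + s * (t - \<tau>), \<tau>)) \<tau>) (- (s * y), y)) = (\<lambda>_. 0)"
      using rel[OF \<tau>T] by (auto simp: g'_def fun_eq_iff algebra_simps)
    moreover have "(\<lambda>x. (\<lambda>(a, t). h a t) ((\<lambda>\<tau>. (a + s * (t - \<tau>), \<tau>)) x)) = \<phi>"
      by (simp add: \<phi>_def fun_eq_iff)
    ultimately show ?thesis using comp by simp
  qed
  obtain c where c: "\<forall>x\<in>{0..t}. \<phi> x = c"
    using has_derivative_zero_constant[OF convex_real_interval(5) d0] by blast
  have "\<phi> t = \<phi> 0" using c tT by auto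
  then show ?thesis by (simp add: \<phi>_def)
qed



lemma dchain:
  assumes "(F has_real_derivative F') (at (c * s + e))"
  shows "((\<lambda>s. F (c * s + e)) has_real_derivative F' * c) (at s within S)"
proof -
  have "((\<lambda>s. c * s + e) has_real_derivative c) (at s within S)"
    by (auto intro!: derivative_eq_intros)
  from DERIV_chain2[OF assms this] show ?thesis .
qed

lemma cont_comp_UNIV:
  "continuous_on UNIV g \<Longrightarrow> continuous_on S h \<Longrightarrow> continuous_on S (\<lambda>p. g (h p))"
  by (rule continuous_on_compose2[of UNIV g S h]) auto

lemma cont4:
  fixes g :: "nat \<Rightarrow> real \<Rightarrow> real"
  assumes "\<And>i. i \<in> {1..4} \<Longrightarrow> continuous_on UNIV (g i)"
  shows "continuous_on A (\<lambda>(x, y, z, t). \<Sum>i\<in>{1..4}. C i * g i (k i * x + l i * y + m i * z + s i * t))"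
  unfolding case_prod_unfold
  apply (intro continuous_on_sum continuous_on_mult_left)
  apply (rule cont_comp_UNIV[OF assms], assumption)
  apply (intro continuous_intros)
  done

context lee begin

definition sp :: "nat \<Rightarrow> real" where
  "sp i = (if i = 1 then c0 * r 1 - U0 * k 1 else if i = 2 then - c0 * r 2 - U0 * k 2 else - U0 * k i)"
definition sh :: "(nat \<Rightarrow> real \<Rightarrow> real) \<Rightarrow> real \<Rightarrow> nat \<Rightarrow> real \<Rightarrow> real" where
  "sh g t = (\<lambda>i a. g i (a + sp i * t))"
definition mlt :: "nat \<Rightarrow> nat \<Rightarrow> real" where
  "mlt a i = (if a = 0 then k i else if a = 1 then l i else if a = 2 then m i else sp i)"

lemma rsq: "r i * r i = k i * k i + l i * l i + m i * m i"
  unfolding rr_def by (metis add_nonneg_nonneg power2_eq_square real_sqrt_pow2 zero_le_square)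

lemma eig:
  assumes "i \<in> {1..4}"
  shows "cf 0 i * sp i + U0 * (cf 0 i * k i) + 1 / \<rho>0 * (cf 3 i * k i) = 0"
    "cf 1 i * sp i + U0 * (cf 1 i * k i) + 1 / \<rho>0 * (cf 3 i * l i) = 0"
    "cf 2 i * sp i + U0 * (cf 2 i * k i) + 1 / \<rho>0 * (cf 3 i * m i) = 0"
    "cf 3 i * sp i + U0 * (cf 3 i * k i) + \<rho>0 * c0\<^sup>2 * (cf 0 i * k i + cf 1 i * l i + cf 2 i * m i) = 0"
proof -
  have "\<rho>0 \<noteq> 0" using rho by auto
  have r1: "r 1 * r 1 = k 1 * k 1 + l 1 * l 1 + m 1 * m 1" and r2: "r 2 * r 2 = k 2 * k 2 + l 2 * l 2 + m 2 * m 2"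
    using rsq by auto
  have c: "i = 1 \<or> i = 2 \<or> i = 3 \<or> i = 4" using assms by auto
  show "cf 0 i * sp i + U0 * (cf 0 i * k i) + 1 / \<rho>0 * (cf 3 i * k i) = 0"
    using c \<open>\<rho>0 \<noteq> 0\<close> by (auto simp: cf_def sp_def field_simps)
  show "cf 1 i * sp i + U0 * (cf 1 i * k i) + 1 / \<rho>0 * (cf 3 i * l i) = 0"
    using c \<open>\<rho>0 \<noteq> 0\<close> by (auto simp: cf_def sp_def field_simps)
  show "cf 2 i * sp i + U0 * (cf 2 i * k i) + 1 / \<rho>0 * (cf 3 i * m i) = 0"
    using c \<open>\<rho>0 \<noteq> 0\<close> by (auto simp: cf_def sp_def field_simps)
  have "cf 3 1 * sp 1 + U0 * (cf 3 1 * k 1) + \<rho>0 * c0\<^sup>2 * (cf 0 1 * k 1 + cf 1 1 * l 1 + cf 2 1 * m 1) = 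
     \<rho>0 * c0\<^sup>2 * (k 1 * k 1 + l 1 * l 1 + m 1 * m 1 - r 1 * r 1)"
    by (simp add: cf_def sp_def algebra_simps power2_eq_square)
  moreover have "cf 3 2 * sp 2 + U0 * (cf 3 2 * k 2) + \<rho>0 * c0\<^sup>2 * (cf 0 2 * k 2 + cf 1 2 * l 2 + cf 2 2 * m 2) = 
     \<rho>0 * c0\<^sup>2 * (k 2 * k 2 + l 2 * l 2 + m 2 * m 2 - r 2 * r 2)"
    by (simp add: cf_def sp_def algebra_simps power2_eq_square)
  ultimately show "cf 3 i * sp i + U0 * (cf 3 i * k i) + \<rho>0 * c0\<^sup>2 * (cf 0 i * k i + cf 1 i * l i + cf 2 i * m i) = 0"
    using c r1 r2 k3 k4 by (auto simp: cf_def sp_def)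
qed

definition S :: "(nat \<Rightarrow> real) \<Rightarrow> nat \<Rightarrow> nat \<Rightarrow> real" where
  "S d j a = (\<Sum>i\<in>{1..4}. cf j i * mlt a i * d i)"

lemma pde_form:
  "S d 0 3 + U0 * S d 0 0 + 1 / \<rho>0 * S d 3 0 = 0"
  "S d 1 3 + U0 * S d 1 0 + 1 / \<rho>0 * S d 3 1 = 0"
  "S d 2 3 + U0 * S d 2 0 + 1 / \<rho>0 * S d 3 2 = 0"
  "S d 3 3 + U0 * S d 3 0 + \<rho>0 * c0\<^sup>2 * (S d 0 0 + S d 1 1 + S d 2 2) = 0"
proof -
  have e: "(\<Sum>i\<in>{1..4}. d i * E i) = 0" if "\<And>i. i \<in> {1..4} \<Longrightarrow> E i = 0" for E :: "nat \<Rightarrow> real"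
    using that by simp
  have "S d 0 3 + U0 * S d 0 0 + 1 / \<rho>0 * S d 3 0 = (\<Sum>i\<in>{1..4}. d i * (cf 0 i * sp i + U0 * (cf 0 i * k i) + 1 / \<rho>0 * (cf 3 i * k i)))"
    unfolding S_def mlt_def by (simp add: sum_distrib_left sum.distrib algebra_simps)
  also have "\<dots> = 0" by (rule e) (rule eig(1), simp)
  finally show "S d 0 3 + U0 * S d 0 0 + 1 / \<rho>0 * S d 3 0 = 0" .
  have "S d 1 3 + U0 * S d 1 0 + 1 / \<rho>0 * S d 3 1 = (\<Sum>i\<in>{1..4}. d i * (cf 1 i * sp i + U0 * (cf 1 i * k i) + 1 / \<rho>0 * (cf 3 i * l i)))"
    unfolding S_def mlt_def by (simp add: sum_distrib_left sum.distrib algebra_simps)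
  also have "\<dots> = 0" by (rule e) (rule eig(2), simp)
  finally show "S d 1 3 + U0 * S d 1 0 + 1 / \<rho>0 * S d 3 1 = 0" .
  have "S d 2 3 + U0 * S d 2 0 + 1 / \<rho>0 * S d 3 2 = (\<Sum>i\<in>{1..4}. d i * (cf 2 i * sp i + U0 * (cf 2 i * k i) + 1 / \<rho>0 * (cf 3 i * m i)))"
    unfolding S_def mlt_def by (simp add: sum_distrib_left sum.distrib algebra_simps)
  also have "\<dots> = 0" by (rule e) (rule eig(3), simp)
  finally show "S d 2 3 + U0 * S d 2 0 + 1 / \<rho>0 * S d 3 2 = 0" .
  have "S d 3 3 + U0 * S d 3 0 + \<rho>0 * c0\<^sup>2 * (S d 0 0 + S d 1 1 + S d 2 2) = (\<Sum>i\<in>{1..4}. d i * (cf 3 i * sp i + U0 * (cf 3 i * k i) + \<rho>0 * c0\<^sup>2 * (cf 0 i * k i + cf 1 i * l i + cf 2 i * m i)))"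
    unfolding S_def mlt_def by (simp add: sum_distrib_left sum.distrib algebra_simps)
  also have "\<dots> = 0" by (rule e) (rule eig(4), simp)
  finally show "S d 3 3 + U0 * S d 3 0 + \<rho>0 * c0\<^sup>2 * (S d 0 0 + S d 1 1 + S d 2 2) = 0" .
qed

lemma term_deriv:
  assumes "(F has_real_derivative F') (at (g s))" and "\<And>s. g s = c * s + e"
  shows "((\<lambda>s. C * F (g s)) has_real_derivative C * c * F') (at s within A)"
proof -
  have g: "g = (\<lambda>s. c * s + e)" using assms(2) by auto
  have "((\<lambda>s. F (c * s + e)) has_real_derivative F' * c) (at s within A)"
    by (rule dchain) (use assms(1) g in simp)
  from DERIV_cmult[OF this, of C] have h: "((\<lambda>s. C * F (c * s + e)) has_real_derivative C * (F' * c)) (at s within A)" .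
  have "C * (F' * c) = C * c * F'" by simp
  with h show ?thesis unfolding g by metis
qed

lemma comp_derivs:
  assumes fd: "\<And>i a. i \<in> {1..4} \<Longrightarrow> (f i has_real_derivative f' i a) (at a)"
  shows "((\<lambda>s. \<Sum>i\<in>{1..4}. cf j i * f i (xi i s y z + sp i * t)) has_real_derivative S (\<lambda>i. f' i (xi i x y z + sp i * t)) j 0) (at x)"
    and "((\<lambda>s. \<Sum>i\<in>{1..4}. cf j i * f i (xi i x s z + sp i * t)) has_real_derivative S (\<lambda>i. f' i (xi i x y z + sp i * t)) j 1) (at y)"
    and "((\<lambda>s. \<Sum>i\<in>{1..4}. cf j i * f i (xi i x y s + sp i * t)) has_real_derivative S (\<lambda>i. f' i (xi i x y z + sp i * t)) j 2) (at z)"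
    and "((\<lambda>s. \<Sum>i\<in>{1..4}. cf j i * f i (xi i x y z + sp i * s)) has_real_derivative S (\<lambda>i. f' i (xi i x y z + sp i * t)) j 3) (at t within A)"
proof -
  have S0: "S d j 0 = (\<Sum>i\<in>{1..4}. cf j i * k i * d i)"
   and S1: "S d j 1 = (\<Sum>i\<in>{1..4}. cf j i * l i * d i)"
   and S2: "S d j 2 = (\<Sum>i\<in>{1..4}. cf j i * m i * d i)"
   and S3: "S d j 3 = (\<Sum>i\<in>{1..4}. cf j i * sp i * d i)" for d
    by (simp_all add: S_def mlt_def)
  show "((\<lambda>s. \<Sum>i\<in>{1..4}. cf j i * f i (xi i s y z + sp i * t)) has_real_derivative S (\<lambda>i. f' i (xi i x y z + sp i * t)) j 0) (at x)"
    unfolding S0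
    apply (rule DERIV_sum)
    subgoal for i
      by (rule term_deriv[where g = "\<lambda>s. xi i s y z + sp i * t" and c = "k i" and e = "l i * y + m i * z + sp i * t"])
         (auto intro: fd simp: xi_def)
    done
  show "((\<lambda>s. \<Sum>i\<in>{1..4}. cf j i * f i (xi i x s z + sp i * t)) has_real_derivative S (\<lambda>i. f' i (xi i x y z + sp i * t)) j 1) (at y)"
    unfolding S1
    apply (rule DERIV_sum)
    subgoal for i
      by (rule term_deriv[where g = "\<lambda>s. xi i x s z + sp i * t" and c = "l i" and e = "k i * x + m i * z + sp i * t"])
         (auto intro: fd simp: xi_def)
    done
  show "((\<lambda>s. \<Sum>i\<in>{1..4}. cf j i * f i (xi i x y s + sp i * t)) has_real_derivative S (\<lambda>i. f' i (xi i x y z + sp i * t)) j 2) (at z)"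
    unfolding S2
    apply (rule DERIV_sum)
    subgoal for i
      by (rule term_deriv[where g = "\<lambda>s. xi i x y s + sp i * t" and c = "m i" and e = "k i * x + l i * y + sp i * t"])
         (auto intro: fd simp: xi_def)
    done
  show "((\<lambda>s. \<Sum>i\<in>{1..4}. cf j i * f i (xi i x y z + sp i * s)) has_real_derivative S (\<lambda>i. f' i (xi i x y z + sp i * t)) j 3) (at t within A)"
    unfolding S3
    apply (rule DERIV_sum)
    subgoal for i
      by (rule term_deriv[where g = "\<lambda>s. xi i x y z + sp i * s" and c = "sp i" and e = "xi i x y z"])
         (auto intro: fd simp: xi_def)
    done
qed

lemma wf_sh: "wf j (sh f t) x y z = (\<Sum>i\<in>{1..4}. cf j i * f i (xi i x y z + sp i * t))"
  by (simp add: wf_def sh_def)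

lemma f_bound:
  assumes "\<forall>j<4. bounded_field (comp j (wave f))" "i \<in> {1..4}"
  shows "\<bar>f i a\<bar> \<le> KL * znorm (wave f)"
  by (rule g_bound[OF _ assms(2)]) (metis assms(1) comp_wave znorm_ge)

lemma sh_bound:
  assumes "\<forall>j<4. bounded_field (comp j (wave f))"
  shows "\<forall>j<4. bounded_field (comp j (wave (sh f t)))"
    and "znorm (wave (sh f t)) \<le> CW * (KL * znorm (wave f))"
proof -
  have b: "\<bar>sh f t i a\<bar> \<le> KL * znorm (wave f)" if "i \<in> {1..4}" for i a
    unfolding sh_def by (rule f_bound[OF assms that])
  have c: "\<bar>comp j (wave (sh f t)) x y z\<bar> \<le> CW * (KL * znorm (wave f))" if "j < 4" for j x y z
    using wf_bound[OF b that] that comp_wave by simp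
  show "\<forall>j<4. bounded_field (comp j (wave (sh f t)))" using c bf_I by blast
  show "znorm (wave (sh f t)) \<le> CW * (KL * znorm (wave f))" by (rule znorm_le) (rule c)
qed

lemma exist:
  assumes bd: "\<forall>j<4. bounded_field (comp j I)" and C1: "\<forall>i\<in>{1..4}. f i C1_differentiable_on UNIV"
    and If: "I = wave f"
  shows "is_solution U0 c0 \<rho>0 (Z2 c0 \<rho>0 k l m) T I (\<lambda>t. wave (sh f t))"
proof -
  have "\<forall>i\<in>{1..4}. \<exists>D. (\<forall>x\<in>UNIV. (f i has_vector_derivative D x) (at x)) \<and> continuous_on UNIV D"
    using C1 unfolding C1_differentiable_on_def by blast
  from bchoice[OF this] obtain f' where f0: "\<forall>i\<in>{1..4}. (\<forall>x\<in>UNIV. (f i has_vector_derivative f' i x) (at x)) \<and> continuous_on UNIV (f' i)"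
    by blast
  then have f': "\<And>i. i \<in> {1..4} \<Longrightarrow> (\<forall>x. (f i has_real_derivative f' i x) (at x)) \<and> continuous_on UNIV (f' i)"
    unfolding has_real_derivative_iff_has_vector_derivative by blast
  have fd: "\<And>i a. i \<in> {1..4} \<Longrightarrow> (f i has_real_derivative f' i a) (at a)" using f' by blast
  have f'c: "\<And>i. i \<in> {1..4} \<Longrightarrow> continuous_on UNIV (f' i)" using f' by blast
  have fc: "continuous_on UNIV (f i)" if i: "i \<in> {1..4}" for i
    by (rule continuous_at_imp_continuous_on) (auto intro: DERIV_isCont fd[OF i])
  have sh0: "sh f 0 = f" by (simp add: sh_def)
  have bd': "\<forall>j<4. bounded_field (comp j (wave f))" using bd If by simp
  have inZ: "wave (sh f t) \<in> Z2 c0 \<rho>0 k l m" for t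
    unfolding Z2_iff
  proof (intro conjI exI[of _ "sh f t"])
    show "\<forall>j<4. bounded_field (comp j (wave (sh f t)))" by (rule sh_bound(1)[OF bd'])
    show "wave (sh f t) = wave (sh f t)" ..
    show "\<forall>i\<in>{1..4}. sh f t i C1_differentiable_on UNIV"
    proof
      fix i :: nat assume i: "i \<in> {1..4}"
      have "((\<lambda>a. f i (a + sp i * t)) has_real_derivative f' i (a + sp i * t)) (at a)" for a
      proof -
        have "((\<lambda>a. a + sp i * t) has_real_derivative 1) (at a)" by (auto intro!: derivative_eq_intros)
        from DERIV_chain2[OF fd[OF i] this] show ?thesis by simp
      qed
      moreover have "continuous_on UNIV (\<lambda>a. f' i (a + sp i * t))"
        by (intro cont_comp_UNIV[OF f'c[OF i]] continuous_intros)
      ultimately show "sh f t i C1_differentiable_on UNIV"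
        unfolding C1_differentiable_on_def sh_def has_real_derivative_iff_has_vector_derivative
        by (intro exI[of _ "\<lambda>a. f' i (a + sp i * t)"]) auto
    qed
  qed
  define D where "D = (\<lambda>j a x y z t. S (\<lambda>i. f' i (xi i x y z + sp i * t)) j a)"
  have C1p: "C1_partials T (\<lambda>x y z t. comp j (wave (sh f t)) x y z) (D j)" if j: "j < 4" for j
  proof -
    have dx: "\<forall>x y z. \<forall>t\<in>{0..T}.
      ((\<lambda>s. \<Sum>i\<in>{1..4}. cf j i * f i (xi i s y z + sp i * t)) has_real_derivative S (\<lambda>i. f' i (xi i x y z + sp i * t)) j 0) (at x) \<and>
      ((\<lambda>s. \<Sum>i\<in>{1..4}. cf j i * f i (xi i x s z + sp i * t)) has_real_derivative S (\<lambda>i. f' i (xi i x y z + sp i * t)) j 1) (at y) \<and>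
      ((\<lambda>s. \<Sum>i\<in>{1..4}. cf j i * f i (xi i x y s + sp i * t)) has_real_derivative S (\<lambda>i. f' i (xi i x y z + sp i * t)) j 2) (at z) \<and>
      ((\<lambda>s. \<Sum>i\<in>{1..4}. cf j i * f i (xi i x y z + sp i * s)) has_real_derivative S (\<lambda>i. f' i (xi i x y z + sp i * t)) j 3) (at t within {0..T})"
      by (intro allI ballI conjI comp_derivs[where f=f and f'=f']; rule fd; assumption)
    have cw: "continuous_on (UNIV \<times> UNIV \<times> UNIV \<times> {0..T}) (\<lambda>(x, y, z, t). \<Sum>i\<in>{1..4}. cf j i * f i (xi i x y z + sp i * t))"
      unfolding xi_def by (rule cont4) (rule fc)
    have cd: "\<forall>a<4. continuous_on (UNIV \<times> UNIV \<times> UNIV \<times> {0..T}) (\<lambda>(x, y, z, t). S (\<lambda>i. f' i (xi i x y z + sp i * t)) j a)"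
      unfolding xi_def S_def by (intro allI impI cont4) (rule f'c)
    show ?thesis
      unfolding C1_partials_def comp_wave[OF j] wf_sh D_def
      using dx cw cd by blast
  qed
  show ?thesis
    unfolding is_solution_def
  proof (intro conjI exI[of _ D])
    show "wave (sh f 0) = I" using sh0 If by simp
    show "\<forall>t\<in>{0..T}. wave (sh f t) \<in> Z2 c0 \<rho>0 k l m" using inZ by blast
    show "\<forall>j<4. C1_partials T (\<lambda>x y z t. comp j (wave (sh f t)) x y z) (D j)" using C1p by blast
    show "\<forall>x y z. \<forall>t\<in>{0..T}.
           D 0 3 x y z t + U0 * D 0 0 x y z t + 1 / \<rho>0 * D 3 0 x y z t = 0 \<and>
           D 1 3 x y z t + U0 * D 1 0 x y z t + 1 / \<rho>0 * D 3 1 x y z t = 0 \<and>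
           D 2 3 x y z t + U0 * D 2 0 x y z t + 1 / \<rho>0 * D 3 2 x y z t = 0 \<and>
           D 3 3 x y z t + U0 * D 3 0 x y z t
             + \<rho>0 * c0\<^sup>2 * (D 0 0 x y z t + D 1 1 x y z t + D 2 2 x y z t) = 0"
      unfolding D_def using pde_form by blast
  qed
qed

end


context lee begin

lemma deriv_lf:
  assumes "\<And>j. j < 4 \<Longrightarrow> ((\<lambda>s. W j s) has_real_derivative W' j) (at s within A)"
  shows "((\<lambda>s. lf i (\<lambda>j. W j s)) has_real_derivative lf i W') (at s within A)"
  unfolding lf_def by (intro DERIV_sum DERIV_cmult assms) simp

lemma S_dual:
  assumes "i \<in> {1..4}"
  shows "lf i (\<lambda>j. S d j a) = mlt a i * d i"
proof -
  have "(\<lambda>j. S d j a) = (\<lambda>j. \<Sum>i'\<in>{1..4}. cf j i' * (mlt a i' * d i'))"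
    by (simp add: S_def mult.assoc)
  then show ?thesis using dual[OF assms, of "\<lambda>i'. mlt a i' * d i'"] by simp
qed

lemma lf_cong: "(\<And>j. j < 4 \<Longrightarrow> v j = w j) \<Longrightarrow> lf i v = lf i w"
  unfolding lf_def by (rule sum.cong) auto

lemma lf_scale: "lf i (\<lambda>j. v j * c) = lf i v * c"
  unfolding lf_def by (simp add: sum_distrib_right mult.assoc)

lemma unique:
  assumes sol: "is_solution U0 c0 \<rho>0 (Z2 c0 \<rho>0 k l m) T I u" and If: "I = wave f"
    and t: "t \<in> {0..T}"
  shows "u t = wave (sh f t)"
proof -
  obtain D where u0: "u 0 = I" and uZ: "\<forall>t\<in>{0..T}. u t \<in> Z2 c0 \<rho>0 k l m"
    and C1p: "\<forall>j<4. C1_partials T (\<lambda>x y z t. comp j (u t) x y z) (D j)"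
    and pde: "\<forall>x y z. \<forall>t\<in>{0..T}.
           D 0 3 x y z t + U0 * D 0 0 x y z t + 1 / \<rho>0 * D 3 0 x y z t = 0 \<and>
           D 1 3 x y z t + U0 * D 1 0 x y z t + 1 / \<rho>0 * D 3 1 x y z t = 0 \<and>
           D 2 3 x y z t + U0 * D 2 0 x y z t + 1 / \<rho>0 * D 3 2 x y z t = 0 \<and>
           D 3 3 x y z t + U0 * D 3 0 x y z t
             + \<rho>0 * c0\<^sup>2 * (D 0 0 x y z t + D 1 1 x y z t + D 2 2 x y z t) = 0"
    using sol unfolding is_solution_def by blast
  have "\<forall>t\<in>{0..T}. \<exists>g. (\<forall>i\<in>{1..4}. g i C1_differentiable_on UNIV) \<and> u t = wave g"
    using uZ Z2_iff by blast
  from bchoice[OF this] obtain G where G: "\<forall>t\<in>{0..T}. (\<forall>i\<in>{1..4}. G t i C1_differentiable_on UNIV) \<and> u t = wave (G t)"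
    by blast
  define dd where "dd t i a = deriv (G t i) a" for t i a
  have Gd: "(G t i has_real_derivative dd t i a) (at a)" if "t \<in> {0..T}" "i \<in> {1..4}" for t i a
  proof -
    have "G t i C1_differentiable_on UNIV" using G that by blast
    then obtain E where "\<forall>x. (G t i has_vector_derivative E x) (at x)"
      unfolding C1_differentiable_on_def by blast
    then have "(G t i has_real_derivative E a) (at a)"
      unfolding has_real_derivative_iff_has_vector_derivative by blast
    then show ?thesis unfolding dd_def using DERIV_imp_deriv by metis
  qed
  have uG: "comp j (u t) x y z = (\<Sum>i\<in>{1..4}. cf j i * G t i (xi i x y z))" if "t \<in> {0..T}" "j < 4" for t j x y z
    using G that comp_wave[OF that(2)] by (simp add: wf_def)
  have Cj: "C1_partials T (\<lambda>x y z t. comp j (u t) x y z) (D j)" if "j < 4" for j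
    using C1p that by blast
  have Dsp: "D j a x y z t = S (\<lambda>i. dd t i (xi i x y z)) j a"
    if tt: "t \<in> {0..T}" and j: "j < 4" and a: "a < 3" for j a x y z t
  proof -
    have fd: "\<And>i a. i \<in> {1..4} \<Longrightarrow> (G t i has_real_derivative dd t i a) (at a)" using Gd[OF tt] by blast
    have cd: "\<forall>x y z. \<forall>t\<in>{0..T}.
        ((\<lambda>s. comp j (u t) s y z) has_real_derivative D j 0 x y z t) (at x) \<and>
        ((\<lambda>s. comp j (u t) x s z) has_real_derivative D j 1 x y z t) (at y) \<and>
        ((\<lambda>s. comp j (u t) x y s) has_real_derivative D j 2 x y z t) (at z) \<and>
        ((\<lambda>s. comp j (u s) x y z) has_real_derivative D j 3 x y z t) (at t within {0..T})"
      using Cj[OF j] unfolding C1_partials_def by (rule conjunct1)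
    have e0: "(\<lambda>s. comp j (u t) s y z) = (\<lambda>s. \<Sum>i\<in>{1..4}. cf j i * G t i (xi i s y z + sp i * 0))"
      using uG[OF tt j] by simp
    have e1: "(\<lambda>s. comp j (u t) x s z) = (\<lambda>s. \<Sum>i\<in>{1..4}. cf j i * G t i (xi i x s z + sp i * 0))"
      using uG[OF tt j] by simp
    have e2: "(\<lambda>s. comp j (u t) x y s) = (\<lambda>s. \<Sum>i\<in>{1..4}. cf j i * G t i (xi i x y s + sp i * 0))"
      using uG[OF tt j] by simp
    have "a = 0 \<or> a = 1 \<or> a = 2" using a by auto
    moreover have "D j 0 x y z t = S (\<lambda>i. dd t i (xi i x y z + sp i * 0)) j 0"
    proof -
      have h1: "((\<lambda>s. comp j (u t) s y z) has_real_derivative D j 0 x y z t) (at x)"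
        using cd tt by blast
      show ?thesis
        by (rule DERIV_unique[OF h1[unfolded e0] comp_derivs(1)[where f = "G t" and f' = "dd t" and t = 0, OF fd]])
    qed
    moreover have "D j 1 x y z t = S (\<lambda>i. dd t i (xi i x y z + sp i * 0)) j 1"
    proof -
      have h1: "((\<lambda>s. comp j (u t) x s z) has_real_derivative D j 1 x y z t) (at y)"
        using cd tt by blast
      show ?thesis
        by (rule DERIV_unique[OF h1[unfolded e1] comp_derivs(2)[where f = "G t" and f' = "dd t" and t = 0, OF fd]])
    qed
    moreover have "D j 2 x y z t = S (\<lambda>i. dd t i (xi i x y z + sp i * 0)) j 2"
    proof -
      have h1: "((\<lambda>s. comp j (u t) x y s) has_real_derivative D j 2 x y z t) (at z)"
        using cd tt by blast
      show ?thesis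
        by (rule DERIV_unique[OF h1[unfolded e2] comp_derivs(3)[where f = "G t" and f' = "dd t" and t = 0, OF fd]])
    qed
    ultimately show ?thesis by auto
  qed
  have Dt: "D j 3 x y z t = S (\<lambda>i. dd t i (xi i x y z)) j 3"
    if tt: "t \<in> {0..T}" and j: "j < 4" for j x y z t
  proof -
    define d where "d = (\<lambda>i. dd t i (xi i x y z))"
    have p: "D 0 3 x y z t + U0 * D 0 0 x y z t + 1 / \<rho>0 * D 3 0 x y z t = 0"
           "D 1 3 x y z t + U0 * D 1 0 x y z t + 1 / \<rho>0 * D 3 1 x y z t = 0"
           "D 2 3 x y z t + U0 * D 2 0 x y z t + 1 / \<rho>0 * D 3 2 x y z t = 0"
           "D 3 3 x y z t + U0 * D 3 0 x y z t
             + \<rho>0 * c0\<^sup>2 * (D 0 0 x y z t + D 1 1 x y z t + D 2 2 x y z t) = 0"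
      using pde tt by blast+
    have r: "D 0 0 x y z t = S d 0 0" "D 1 0 x y z t = S d 1 0" "D 2 0 x y z t = S d 2 0" "D 3 0 x y z t = S d 3 0"
       "D 3 1 x y z t = S d 3 1" "D 3 2 x y z t = S d 3 2" "D 1 1 x y z t = S d 1 1" "D 2 2 x y z t = S d 2 2"
      using Dsp[OF tt] unfolding d_def by auto
    note q = pde_form[of d]
    have "j = 0 \<or> j = 1 \<or> j = 2 \<or> j = 3" using j by auto
    moreover have "D 0 3 x y z t = S d 0 3" using p(1) q(1) unfolding r by linarith
    moreover have "D 1 3 x y z t = S d 1 3" using p(2) q(2) unfolding r by linarith
    moreover have "D 2 3 x y z t = S d 2 3" using p(3) q(3) unfolding r by linarith
    moreover have "D 3 3 x y z t = S d 3 3" using p(4) q(4) unfolding r by linarith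
    ultimately show ?thesis unfolding d_def by auto
  qed
  have cdall: "\<forall>x y z. \<forall>t\<in>{0..T}.
        ((\<lambda>s. comp j (u t) s y z) has_real_derivative D j 0 x y z t) (at x) \<and>
        ((\<lambda>s. comp j (u t) x s z) has_real_derivative D j 1 x y z t) (at y) \<and>
        ((\<lambda>s. comp j (u t) x y s) has_real_derivative D j 2 x y z t) (at z) \<and>
        ((\<lambda>s. comp j (u s) x y z) has_real_derivative D j 3 x y z t) (at t within {0..T})"
     and contall: "\<forall>a<4. continuous_on (UNIV \<times> UNIV \<times> UNIV \<times> {0..T}) (\<lambda>(x, y, z, t). D j a x y z t)"
    if j: "j < 4" for j
    using Cj[OF j] unfolding C1_partials_def by blast+
  have Gsh: "G t i a = f i (a + sp i * t)" if tt: "t \<in> {0..T}" and i: "i \<in> {1..4}" for t i a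
  proof -
    have ki: "k i \<noteq> 0" by (rule kne_i[OF i])
    define h where "h a t = lf i (\<lambda>j. comp j (u t) (a / k i) 0 0)" for a t
    define ha where "ha a t = lf i (\<lambda>j. D j 0 (a / k i) 0 0 t) / k i" for a t
    define ht where "ht a t = lf i (\<lambda>j. D j 3 (a / k i) 0 0 t)" for a t
    have A: "((\<lambda>a. h a t) has_real_derivative ha a t) (at a)" if tt: "t \<in> {0..T}" for a t
    proof -
      have "((\<lambda>a. comp j (u t) (a / k i) 0 0) has_real_derivative D j 0 (a / k i) 0 0 t * (1 / k i)) (at a)"
        if j: "j < 4" for j
      proof -
        have h1: "((\<lambda>s. comp j (u t) s 0 0) has_real_derivative D j 0 (a / k i) 0 0 t) (at (a / k i))"
          using cdall[OF j] tt by blast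
        have h2: "((\<lambda>a. a / k i) has_real_derivative 1 / k i) (at a)"
          using ki by (auto intro!: derivative_eq_intros)
        from DERIV_chain2[OF h1 h2] show ?thesis .
      qed
      from deriv_lf[of "\<lambda>j a. comp j (u t) (a / k i) 0 0", OF this]
      show ?thesis unfolding h_def ha_def lf_scale by simp
    qed
    have B: "((\<lambda>t. h a t) has_real_derivative ht a t) (at t within {0..T})" if tt: "t \<in> {0..T}" for a t
    proof -
      have "((\<lambda>t. comp j (u t) (a / k i) 0 0) has_real_derivative D j 3 (a / k i) 0 0 t) (at t within {0..T})"
        if j: "j < 4" for j
        using cdall[OF j] tt by blast
      from deriv_lf[of "\<lambda>j t. comp j (u t) (a / k i) 0 0", OF this]
      show ?thesis unfolding h_def ht_def by simp
    qed
    have C: "continuous_on (UNIV \<times> {0..T}) (\<lambda>(a, t). ht a t)"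
    proof -
      have cj: "continuous_on (UNIV \<times> {0..T}) (\<lambda>(a, t). D j 3 (a / k i) 0 0 t)" if j: "j < 4" for j
      proof -
        have c3: "continuous_on (UNIV \<times> UNIV \<times> UNIV \<times> {0..T}) (\<lambda>(x, y, z, t). D j 3 x y z t)"
          using contall[OF j] by auto
        have cin: "continuous_on (UNIV \<times> {0..T}) (\<lambda>p::real\<times>real. (fst p / k i, 0::real, 0::real, snd p))"
          using ki by (intro continuous_intros) auto
        have sub: "(\<lambda>p::real\<times>real. (fst p / k i, 0::real, 0::real, snd p)) ` (UNIV \<times> {0..T}) \<subseteq> UNIV \<times> UNIV \<times> UNIV \<times> {0..T}"
          by auto
        from continuous_on_compose2[OF c3 cin sub]
        show ?thesis by (simp add: case_prod_unfold)
      qed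
      have "(\<lambda>(a, t). ht a t) = (\<lambda>p. \<Sum>j<4. Lc i j * (\<lambda>(a, t). D j 3 (a / k i) 0 0 t) p)"
        by (auto simp: ht_def lf_def fun_eq_iff)
      moreover have "continuous_on (UNIV \<times> {0..T}) (\<lambda>p. \<Sum>j<4. Lc i j * (\<lambda>(a, t). D j 3 (a / k i) 0 0 t) p)"
        by (intro continuous_on_sum continuous_on_mult_left cj) auto
      ultimately show ?thesis by simp
    qed
    have R: "ht a t = sp i * ha a t" if tt: "t \<in> {0..T}" for a t
    proof -
      define d where "d = (\<lambda>i'. dd t i' (xi i' (a / k i) 0 0))"
      have "ht a t = lf i (\<lambda>j. S d j 3)"
        unfolding ht_def d_def by (rule lf_cong) (simp add: Dt[OF tt])
      also have "\<dots> = sp i * d i" using S_dual[OF i] by (simp add: mlt_def)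
      finally have 1: "ht a t = sp i * d i" .
      have "ha a t = lf i (\<lambda>j. S d j 0) / k i"
        unfolding ha_def d_def by (subst lf_cong[where w = "\<lambda>j. S (\<lambda>i'. dd t i' (xi i' (a / k i) 0 0)) j 0"]) (simp_all add: Dsp[OF tt])
      also have "\<dots> = d i" using S_dual[OF i] ki by (simp add: mlt_def)
      finally show ?thesis using 1 by simp
    qed
    have tr: "h a t = h (a + sp i * t) 0"
      by (rule transport[where ha = ha and ht = ht and T = T, OF A B C R tt])
    have "h a t = G t i a"
    proof -
      have "h a t = lf i (\<lambda>j. wf j (G t) (a / k i) 0 0)"
        unfolding h_def by (rule lf_cong) (use G tt comp_wave in auto)
      then show ?thesis using lf_wave[OF i] by simp
    qed
    moreover have "h (a + sp i * t) 0 = f i (a + sp i * t)"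
    proof -
      have "h (a + sp i * t) 0 = lf i (\<lambda>j. wf j f ((a + sp i * t) / k i) 0 0)"
        unfolding h_def by (rule lf_cong) (use u0 If comp_wave in auto)
      then show ?thesis using lf_wave[OF i] by simp
    qed
    ultimately show ?thesis using tr by simp
  qed
  have "u t = wave (G t)" using G t by blast
  also have "\<dots> = wave (sh f t)"
    by (rule wave_cong) (auto simp: sh_def Gsh[OF t])
  finally show ?thesis .
qed


end


context lee begin

lemma comp_zsub: "comp j (zsub A B) x y z = comp j A x y z - comp j B x y z"
  by (cases A; cases B) (simp add: zsub_def comp_def)

lemma zsub_wave: "zsub (wave g1) (wave g2) = wave (\<lambda>i a. g1 i a - g2 i a)"
  by (simp add: zsub_def wave_def wf_def sum_subtractf right_diff_distrib fun_eq_iff)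

lemma sh_diff: "(\<lambda>i a. sh g1 t i a - sh g2 t i a) = sh (\<lambda>i a. g1 i a - g2 i a) t"
  by (simp add: sh_def)

lemma Z2_wave:
  assumes "I \<in> Z2 c0 \<rho>0 k l m"
  obtains f where "\<forall>j<4. bounded_field (comp j I)" "\<forall>i\<in>{1..4}. f i C1_differentiable_on UNIV" "I = wave f"
  using assms unfolding Z2_iff by blast

lemma sol_eq:
  assumes "I \<in> Z2 c0 \<rho>0 k l m" "is_solution U0 c0 \<rho>0 (Z2 c0 \<rho>0 k l m) T I u" "t \<in> {0..T}"
    "I = wave f"
  shows "u t = wave (sh f t)"
  using unique[OF assms(2) assms(4) assms(3)] .

lemma main: "(\<forall>t0>0. well_posed U0 c0 \<rho>0 (Z2 c0 \<rho>0 k l m) t0) \<and> null_stable U0 c0 \<rho>0 (Z2 c0 \<rho>0 k l m)"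
proof -
  let ?Z = "Z2 c0 \<rho>0 k l m"
  have wp: "well_posed U0 c0 \<rho>0 ?Z t0" for t0
    unfolding well_posed_def
  proof (intro conjI ballI allI impI)
    fix I assume I: "I \<in> ?Z"
    then obtain f where bd: "\<forall>j<4. bounded_field (comp j I)" and C1: "\<forall>i\<in>{1..4}. f i C1_differentiable_on UNIV"
      and If: "I = wave f" by (rule Z2_wave)
    show "\<exists>u. is_solution U0 c0 \<rho>0 ?Z t0 I u"
      using exist[OF bd C1 If] by blast
    fix u v t
    assume "is_solution U0 c0 \<rho>0 ?Z t0 I u" "is_solution U0 c0 \<rho>0 ?Z t0 I v" "t \<in> {0..t0}"
    then show "u t = v t" using unique If by metis
  next
    fix In I un u t
    assume In: "\<forall>n. In n \<in> ?Z" and I: "I \<in> ?Z" and lim: "(\<lambda>n. znorm (zsub (In n) I)) \<longlonglongrightarrow> 0"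
      and sn: "\<forall>n. is_solution U0 c0 \<rho>0 ?Z t0 (In n) (un n)" and su: "is_solution U0 c0 \<rho>0 ?Z t0 I u"
      and t: "t \<in> {0..t0}"
    obtain f where bd: "\<forall>j<4. bounded_field (comp j I)" and If: "I = wave f"
      using I by (rule Z2_wave)
    have "\<forall>n. \<exists>g. (\<forall>j<4. bounded_field (comp j (In n))) \<and> In n = wave g"
      using In Z2_iff by blast
    then obtain fn where bdn: "\<And>n. \<forall>j<4. bounded_field (comp j (In n))" and Ifn: "\<And>n. In n = wave (fn n)"
      by metis
    define dn where "dn n = (\<lambda>i a. fn n i a - f i a)" for n
    have wdn: "wave (dn n) = zsub (In n) I" for n
      unfolding dn_def If Ifn zsub_wave ..
    have bdd: "\<forall>j<4. bounded_field (comp j (wave (dn n)))" for n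
    proof (intro allI impI)
      fix j :: nat assume j: "j < 4"
      show "bounded_field (comp j (wave (dn n)))"
        unfolding wdn
      proof (rule bf_I[where B = "znorm (In n) + znorm I"])
        fix x y z
        have "\<bar>comp j (In n) x y z\<bar> \<le> znorm (In n)" by (rule znorm_ge[OF bdn j])
        moreover have "\<bar>comp j I x y z\<bar> \<le> znorm I" by (rule znorm_ge[OF bd j])
        ultimately show "\<bar>comp j (zsub (In n) I) x y z\<bar> \<le> znorm (In n) + znorm I"
          unfolding comp_zsub by arith
      qed
    qed
    have eq: "zsub (un n t) (u t) = wave (sh (dn n) t)" for n
    proof -
      have "un n t = wave (sh (fn n) t)" using unique[OF spec[OF sn, of n] Ifn t] .
      moreover have "u t = wave (sh f t)" using unique[OF su If t] .
      ultimately show ?thesis by (simp add: zsub_wave sh_diff dn_def)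
    qed
    show "(\<lambda>n. znorm (zsub (un n t) (u t))) \<longlonglongrightarrow> 0"
    proof (rule Lim_null_comparison)
      show "\<forall>\<^sub>F n in sequentially. norm (znorm (zsub (un n t) (u t))) \<le> CW * KL * znorm (zsub (In n) I)"
      proof (intro always_eventually allI)
        fix n
        have "0 \<le> znorm (wave (sh (dn n) t))" by (rule znorm_nonneg[OF sh_bound(1)[OF bdd]])
        moreover have "znorm (wave (sh (dn n) t)) \<le> CW * (KL * znorm (wave (dn n)))" by (rule sh_bound(2)[OF bdd])
        ultimately show "norm (znorm (zsub (un n t) (u t))) \<le> CW * KL * znorm (zsub (In n) I)"
          by (simp add: eq wdn mult.assoc)
      qed
      show "(\<lambda>n. CW * KL * znorm (zsub (In n) I)) \<longlonglongrightarrow> 0"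
        using tendsto_mult_right_zero[OF lim, of "CW * KL"] by simp
    qed
  qed
  have st: "\<forall>\<epsilon>>0. \<exists>\<eta>>0. \<forall>I\<in>?Z. znorm I < \<eta> \<longrightarrow>
        (\<forall>t0>0. \<forall>u. is_solution U0 c0 \<rho>0 ?Z t0 I u \<longrightarrow> (\<forall>t\<in>{0..t0}. znorm (u t) < \<epsilon>))"
  proof (intro allI impI)
    fix \<epsilon> :: real assume e: "\<epsilon> > 0"
    define C where "C = CW * KL"
    have C: "C \<ge> 0" unfolding C_def using CW_nonneg KL_nonneg by simp
    define \<eta> where "\<eta> = \<epsilon> / (C + 1)"
    have eta: "\<eta> > 0" unfolding \<eta>_def using e C by simp
    have Ceta: "C * \<eta> < \<epsilon>"
    proof -
      have "C * \<eta> = \<epsilon> * (C / (C + 1))" unfolding \<eta>_def by (simp add: field_simps)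
      also have "\<dots> < \<epsilon> * 1" using e C by (intro mult_strict_left_mono) auto
      finally show ?thesis by simp
    qed
    show "\<exists>\<eta>>0. \<forall>I\<in>?Z. znorm I < \<eta> \<longrightarrow>
        (\<forall>t0>0. \<forall>u. is_solution U0 c0 \<rho>0 ?Z t0 I u \<longrightarrow> (\<forall>t\<in>{0..t0}. znorm (u t) < \<epsilon>))"
    proof (intro exI[of _ \<eta>] conjI eta ballI impI allI)
      fix I t0 u t
      assume I: "I \<in> ?Z" and small: "znorm I < \<eta>" and "t0 > 0" and su: "is_solution U0 c0 \<rho>0 ?Z t0 I u"
        and t: "t \<in> {0..t0}"
      obtain f where bd: "\<forall>j<4. bounded_field (comp j I)" and If: "I = wave f"
        using I by (rule Z2_wave)
      have bd': "\<forall>j<4. bounded_field (comp j (wave f))" using bd If by simp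
      have "u t = wave (sh f t)" using unique[OF su If t] .
      then have "znorm (u t) \<le> C * znorm I"
        using sh_bound(2)[OF bd', of t] If by (simp add: C_def mult.assoc)
      also have "\<dots> \<le> C * \<eta>" using small C by (intro mult_left_mono) auto
      also have "\<dots> < \<epsilon>" by (rule Ceta)
      finally show "znorm (u t) < \<epsilon>" .
    qed
  qed
  show ?thesis unfolding null_stable_def using wp st by blast
qed

end

theorem proposition21:
  fixes U0 c0 \<rho>0 :: real and k l m :: "nat \<Rightarrow> real"
  assumes "U0 > 0" and "c0 > 0" and "\<rho>0 > 0"
    and "k 1 * k 2 * k 3 * k 4 \<noteq> 0"
    and "Delta c0 \<rho>0 k l m \<noteq> 0"
  shows "(\<forall>t0>0. well_posed U0 c0 \<rho>0 (Z2 c0 \<rho>0 k l m) t0) \<and> null_stable U0 c0 \<rho>0 (Z2 c0 \<rho>0 k l m)"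
proof -
  interpret lee U0 c0 \<rho>0 k l m using assms by unfold_locales
  show ?thesis by (rule main)
qed


end
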